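(* For all $a\in\mathbb F_{3^m}^*$ and $b\in\mathbb F_{3^{2m}}$, the vector $(\mathrm{Tr}_{2m}(at^{3^m+1})\,\mathrm{Tr}_{2m}(bt))_{t\in\mathbb F_{3^{2m}}}$ belongs to $\mathcal C_3(\mathbb D_d)$.
   Context: Let $m\ge 2$ be an integer. For $s\in\{m,2m\}$ let $\mathrm{Tr}_s:\mathbb F_{3^s}\to\mathbb F_3$ denote the absolute trace. Vectors in $\mathbb F_3^{3^{2m}}$ are indexed by $\mathbb F_{3^{2m}}$, and a function $f:\mathbb F_{3^{2m}}\to\mathbb F_3$ is identified with $(f(t))_{t\in\mathbb F_{3^{2m}}}$. Let $\mathcal C(2m,3)=\{(\mathrm{Tr}_{2m}(at^{3^m+1}+bt)+h)_{t\in\mathbb F_{3^{2m}}}: a\in\mathbb F_{3^m}, b\in\mathbb F_{3^{2m}}, h\in\mathbb F_3\}$, let $d$ be its minimum nonzero Hamming weight, let $\mathbb D_d$ be the incidence structure on $\mathbb F_{3^{2m}}$ whose blocks are the supports of the weight-$d$ codewords, and let $\mathcal C_3(\mathbb D_d)$ be the $\mathbb F_3$-span of the incidence vectors of the blocks (entry $1$ on the block, $0$ elsewhere). *)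

theory Defs
  imports Main "HOL-Library.Cardinality"
begin

text \<open>The field F_{3^{2m}} is modelled by a finite field type 'a of cardinality 3^(2m)
  (characteristic 3). The prime field F_3 is identified with the subfield {x. x^3 = x} of 'a,
  and F_{3^m} with the subfield {x. x^(3^m) = x}. Vectors indexed by F_{3^{2m}} with entries
  in F_3 are functions 'a => 'a taking values in the prime subfield.\<close>

definition prime_subfield :: "'a::field set" where
  "prime_subfield = {x. x ^ 3 = x}"

definition subfield_pm :: "nat \<Rightarrow> 'a::field set" where
  "subfield_pm m = {x. x ^ (3 ^ m) = x}"

definition trace3 :: "nat \<Rightarrow> 'a::field \<Rightarrow> 'a" where
  "trace3 s x = (\<Sum>i<s. x ^ (3 ^ i))"

definition code_C :: "nat \<Rightarrow> ('a::{field,finite} \<Rightarrow> 'a) set" where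
  "code_C m = {(\<lambda>t. trace3 (2*m) (a * t ^ (3 ^ m + 1) + b * t) + h) | a b h.
                 a \<in> subfield_pm m \<and> h \<in> prime_subfield}"

definition hweight :: "('a::finite \<Rightarrow> 'b::zero) \<Rightarrow> nat" where
  "hweight c = card {t. c t \<noteq> 0}"

definition min_weight :: "'a::{field,finite} itself \<Rightarrow> nat \<Rightarrow> nat" where
  "min_weight (_::'a itself) m = (LEAST w. \<exists>c\<in>(code_C m :: ('a::{field,finite} \<Rightarrow> 'a) set). c \<noteq> (\<lambda>_. 0) \<and> hweight c = w)"

definition blocks_Dd :: "nat \<Rightarrow> ('a::{field,finite}) set set" where
  "blocks_Dd m = {{t. c t \<noteq> 0} | c. c \<in> (code_C m :: ('a \<Rightarrow> 'a) set) \<and> c \<noteq> (\<lambda>_. 0)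
                   \<and> hweight c = min_weight TYPE('a) m}"

definition incidence_vec :: "'a set \<Rightarrow> ('a \<Rightarrow> 'b::{zero,one})" where
  "incidence_vec B = (\<lambda>t. if t \<in> B then 1 else 0)"

text \<open>F_3-span of the incidence vectors of the blocks (the set of blocks is finite).\<close>
definition design_code :: "nat \<Rightarrow> ('a::{field,finite} \<Rightarrow> 'a) set" where
  "design_code m = {(\<lambda>t. \<Sum>B\<in>blocks_Dd m. k B * incidence_vec B t) | k.
                      \<forall>B. k B \<in> prime_subfield}"

end

theory Submission
  imports Defs "HOL-Number_Theory.Residues" "HOL-Computational_Algebra.Polynomial"
begin

lemma split_sum:
  fixes a b :: nat and f :: "nat \<Rightarrow> 'c::comm_monoid_add"
  shows "(\<Sum>i<a+b. f i) = (\<Sum>i<a. f i) + (\<Sum>i<b. f (a+i))"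
  by (induction b) (simp_all add: add.assoc)

context
  fixes m :: nat
  assumes cardF: "CARD('a::{field,finite}) = 3 ^ (2 * m)"
begin

lemma CHAR3: "CHAR('a) = 3"
proof -
  have "CHAR('a) dvd 3 ^ (2*m)" using CHAR_dvd_CARD[where 'a='a] cardF by simp
  moreover have "prime CHAR('a)"
    using prime_CHAR_semidom[where ?'a = 'a] finite_imp_CHAR_pos[of] by (simp add: finite_imp_CHAR_pos)
  ultimately show ?thesis
  proof -
    assume a: "CHAR('a) dvd 3 ^ (2*m)" "prime CHAR('a)"
    have "CHAR('a) dvd 3" using prime_dvd_power[OF a(2) a(1)] .
    moreover have "prime (3::nat)" by simp
    ultimately show ?thesis using a(2) primes_dvd_imp_eq by blast
  qed
qed


lemma three0: "(3::'a) = 0"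
  using of_nat_CHAR[where 'a='a] CHAR3 by simp

lemma two_eq: "(2::'a) = -1"
proof -
  have "(2::'a) + 1 = 0" using three0 by simp
  thus ?thesis by (simp add: add_eq_0_iff)
qed

lemma two_ne0: "(2::'a) \<noteq> 0"
proof
  assume "(2::'a) = 0"
  then have "(-1::'a) = 0" using two_eq by simp
  thus False by simp
qed

lemma frob: "(x + y :: 'a)^(3^k) = x^(3^k) + y^(3^k)"
  by (rule freshmans_dream') (simp_all add: CHAR3)

lemma frob_sum: "(sum f A :: 'a)^(3^k) = sum (\<lambda>i. f i^(3^k)) A"
  by (rule freshmans_dream_sum') (simp_all add: CHAR3)

lemma frob_minus: "(- x :: 'a)^(3^k) = - (x^(3^k))"
  by (simp add: power_minus_odd)

lemma frob_diff: "(x - y :: 'a)^(3^k) = x^(3^k) - y^(3^k)"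
  using frob[of x "-y" k] frob_minus[of y k] by simp

lemma pow_n: "(x::'a) ^ (3 ^ (2*m)) = x"
proof (cases "x = 0")
  case False
  have cpos: "card (UNIV :: 'a set) > 0" by simp
  have "x * (\<Prod>y\<in>UNIV-{0}. x * y) = x * x ^ (card (UNIV :: 'a set) - 1) * \<Prod>(UNIV-{0})"
    by (simp add: prod.distrib mult_ac)
  also have "x * x ^ (card (UNIV :: 'a set) - 1) = x ^ Suc (card (UNIV :: 'a set) - 1)"
    by (subst power_Suc) auto
  also have "Suc (card (UNIV :: 'a set) - 1) = card (UNIV :: 'a set)"
    using cpos by simp
  also have "(\<Prod>y\<in>UNIV-{0}. x * y) = (\<Prod>y\<in>UNIV-{0}. y)"
    by (rule prod.reindex_bij_witness[of _ "\<lambda>y. y / x" "\<lambda>y. x * y"]) (use False in auto)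
  finally have "x ^ card (UNIV :: 'a set) = x"
    by simp
  thus ?thesis using cardF by simp
qed (simp)

lemma pow_qq: "((x::'a) ^ (3 ^ m)) ^ (3 ^ m) = x"
proof -
  have "((x::'a) ^ (3 ^ m)) ^ (3 ^ m) = x ^ (3^(2*m))"
    by (simp add: power_mult[symmetric] power_add[symmetric] mult_2)
  thus ?thesis using pow_n by simp
qed

lemma P_iff: "(x::'a) \<in> prime_subfield \<longleftrightarrow> x = 0 \<or> x = 1 \<or> x = -1"
proof -
  have "x^3 - x = x * (x - 1) * (x + 1)" by (simp add: power3_eq_cube algebra_simps)
  hence "x^3 = x \<longleftrightarrow> x * (x - 1) * (x + 1) = 0" by (metis eq_iff_diff_eq_0)
  also have "\<dots> \<longleftrightarrow> x = 0 \<or> x = 1 \<or> x = -1"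
    by (auto simp: add_eq_0_iff minus_equation_iff)
  finally show ?thesis unfolding prime_subfield_def by simp
qed

lemma P_add: "(x::'a) \<in> prime_subfield \<Longrightarrow> y \<in> prime_subfield \<Longrightarrow> x + y \<in> prime_subfield"
proof -
  have a: "(1::'a) + 1 = -1" using two_eq by simp
  have b: "(-1::'a) + -1 = 1" using a by (metis minus_add_distrib minus_minus)
  show "x \<in> prime_subfield \<Longrightarrow> y \<in> prime_subfield \<Longrightarrow> x + y \<in> prime_subfield"
    unfolding P_iff using a b by auto
qed

lemma P_minus: "(x::'a) \<in> prime_subfield \<Longrightarrow> - x \<in> prime_subfield"
  unfolding P_iff by auto

lemma P_diff: "(x::'a) \<in> prime_subfield \<Longrightarrow> y \<in> prime_subfield \<Longrightarrow> x - y \<in> prime_subfield"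
  using P_add[of x "-y"] P_minus[of y] by simp

lemma P_mult: "(x::'a) \<in> prime_subfield \<Longrightarrow> y \<in> prime_subfield \<Longrightarrow> x * y \<in> prime_subfield"
  unfolding P_iff by auto

lemma P_0: "(0::'a) \<in> prime_subfield" and P_1: "(1::'a) \<in> prime_subfield"
  and P_m1: "(-1::'a) \<in> prime_subfield"
  unfolding P_iff by auto

lemma P_sq: "(x::'a) \<in> prime_subfield \<Longrightarrow> x^2 = (if x = 0 then 0 else 1)"
  unfolding P_iff by auto

lemma P_pow3k: "(x::'a) \<in> prime_subfield \<Longrightarrow> x^(3^k) = x"
proof (induction k)
  case (Suc k)
  have "x^(3^Suc k) = (x^(3^k))^3" by (simp add: power_mult[symmetric] mult.commute)
  thus ?case using Suc by (simp add: prime_subfield_def)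
qed simp

lemma T_add: "trace3 s (x + y :: 'a) = trace3 s x + trace3 s y"
  unfolding trace3_def by (simp add: frob sum.distrib)

lemma T_minus: "trace3 s (- x :: 'a) = - trace3 s x"
  unfolding trace3_def by (simp add: frob_minus sum_negf)

lemma T_diff: "trace3 s (x - y :: 'a) = trace3 s x - trace3 s y"
  unfolding trace3_def by (simp add: frob_diff sum_subtractf)

lemma T_zero: "trace3 s (0::'a) = 0"
  unfolding trace3_def by (simp add: power_0_left)

lemma T_smult: "c \<in> prime_subfield \<Longrightarrow> trace3 s (c * x :: 'a) = c * trace3 s x"
  unfolding trace3_def by (simp add: power_mult_distrib P_pow3k sum_distrib_left)

lemma T_shift: "(\<Sum>i<2*m. (x::'a)^(3^(Suc i))) = trace3 (2*m) x"
proof -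
  let ?f = "\<lambda>i. x^(3^i)"
  have "(\<Sum>i<Suc (2*m). ?f i) = ?f 0 + (\<Sum>i<2*m. ?f (Suc i))"
    by (rule sum.lessThan_Suc_shift)
  moreover have "(\<Sum>i<Suc (2*m). ?f i) = (\<Sum>i<2*m. ?f i) + ?f (2*m)"
    by simp
  moreover have "?f (2*m) = ?f 0" using pow_n by simp
  ultimately show ?thesis unfolding trace3_def by (simp add: add.commute)
qed

lemma T_P: "trace3 (2*m) (x::'a) \<in> prime_subfield"
proof -
  have "trace3 (2*m) x ^ (3^1) = (\<Sum>i<2*m. (x^(3^i))^(3^1))"
    unfolding trace3_def by (rule frob_sum)
  also have "\<dots> = (\<Sum>i<2*m. x^(3^(Suc i)))"
    by (simp add: power_mult[symmetric] mult.commute)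
  finally show ?thesis using T_shift unfolding prime_subfield_def by simp
qed

lemma T_pow3: "trace3 (2*m) ((x::'a)^3) = trace3 (2*m) x"
proof -
  have "trace3 (2*m) (x^3) = (\<Sum>i<2*m. x^(3^(Suc i)))"
    unfolding trace3_def by (simp add: power_mult[symmetric] mult.commute)
  thus ?thesis using T_shift by simp
qed

lemma T_pow3k: "trace3 (2*m) ((x::'a)^(3^k)) = trace3 (2*m) x"
proof (induction k)
  case (Suc k)
  have "x^(3^Suc k) = (x^(3^k))^3" by (simp add: power_mult[symmetric] mult.commute)
  thus ?case using Suc T_pow3 by simp
qed simp


lemma roots_le:
  fixes p :: "'a poly"
  assumes "coeff p j \<noteq> 0" "degree p \<le> j"
  shows "card {x. poly p x = 0} \<le> j"
proof -
  have "p \<noteq> 0" using assms(1) by auto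
  thus ?thesis using card_poly_roots_bound[of p] assms(2) by linarith
qed

lemma sum_pow_nonvanish:
  assumes "k \<ge> 1" "card (D::'a set) > 3^(k-1)"
  shows "\<exists>x\<in>D. (\<Sum>i<k. x^(3^i)) \<noteq> 0"
proof (rule ccontr)
  assume "\<not> ?thesis"
  hence z: "\<And>x. x \<in> D \<Longrightarrow> (\<Sum>i<k. x^(3^i)) = 0" by auto
  define p :: "'a poly" where "p = (\<Sum>i<k. monom 1 (3^i))"
  have ev: "poly p x = (\<Sum>i<k. x^(3^i))" for x
    unfolding p_def by (simp add: poly_sum poly_monom)
  have "coeff p (3^(k-1)) = (\<Sum>i<k. if i = k - 1 then 1 else 0)"
    unfolding p_def coeff_sum coeff_monom by (intro sum.cong) auto
  also have "\<dots> = 1" using assms(1) by (simp add: sum.delta')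
  finally have c: "coeff p (3^(k-1)) \<noteq> 0" by simp
  have d: "degree p \<le> 3^(k-1)"
    unfolding p_def
  proof (rule degree_sum_le)
    fix i assume "i \<in> {..<k}"
    hence "(3::nat)^i \<le> 3^(k-1)" by (intro power_increasing) auto
    thus "degree (monom (1::'a) (3^i)) \<le> 3^(k-1)" by (simp add: degree_monom_eq)
  qed simp
  have "D \<subseteq> {x. poly p x = 0}" using z ev by auto
  hence "card D \<le> card {x. poly p x = 0}" by (intro card_mono) auto
  also have "\<dots> \<le> 3^(k-1)" by (rule roots_le[OF c d])
  finally show False using assms(2) by simp
qed

lemma T_nonvanish: assumes "m \<ge> 1" shows "\<exists>x::'a. trace3 (2*m) x \<noteq> 0"
proof -
  have "card (UNIV::'a set) > 3^(2*m-1)" using cardF assms by simp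
  then obtain x :: 'a where "(\<Sum>i<2*m. x^(3^i)) \<noteq> 0"
    using sum_pow_nonvanish[of "2*m" UNIV] assms by auto
  thus ?thesis unfolding trace3_def by blast
qed

lemma fiber_le:
  assumes "j \<ge> 1"
  shows "card {t::'a. t^j = u} \<le> j"
proof -
  define p :: "'a poly" where "p = monom 1 j - [:u:]"
  have ev: "poly p x = x^j - u" for x unfolding p_def by (simp add: poly_monom)
  have "coeff [:u:] j = 0"
    using assms by (intro coeff_eq_0) simp
  hence c: "coeff p j \<noteq> 0" unfolding p_def by simp
  have d: "degree p \<le> j" unfolding p_def
    by (intro degree_diff_le) (simp_all add: degree_monom_eq)
  have "{t::'a. t^j = u} = {x. poly p x = 0}" using ev by auto
  thus ?thesis using roots_le[OF c d] by simp
qed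

lemma S_card_le:
  assumes "m \<ge> 1"
  shows "card (subfield_pm m :: 'a set) \<le> 3^m"
proof -
  have q2: "(3::nat)^m \<ge> 3"
    using power_increasing[of 1 m "3::nat"] assms by simp
  define p :: "'a poly" where "p = monom 1 (3^m) - [:0,1:]"
  have ev: "poly p x = x^(3^m) - x" for x unfolding p_def by (simp add: poly_monom)
  have "coeff [:0,1::'a:] (3^m) = 0"
    using q2 by (intro coeff_eq_0) simp
  hence c: "coeff p (3^m) \<noteq> 0" unfolding p_def by simp
  have d: "degree p \<le> 3^m" unfolding p_def using q2
    by (intro degree_diff_le) (simp_all add: degree_monom_eq)
  have "(subfield_pm m :: 'a set) = {x. poly p x = 0}" using ev unfolding subfield_pm_def by auto
  thus ?thesis using roots_le[OF c d] by simp
qed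


lemma S_mult: "x \<in> subfield_pm m \<Longrightarrow> y \<in> subfield_pm m \<Longrightarrow> (x * y :: 'a) \<in> subfield_pm m"
  unfolding subfield_pm_def by (simp add: power_mult_distrib)
lemma S_add: "x \<in> subfield_pm m \<Longrightarrow> y \<in> subfield_pm m \<Longrightarrow> (x + y :: 'a) \<in> subfield_pm m"
  unfolding subfield_pm_def by (simp add: frob)
lemma S_divide: "x \<in> subfield_pm m \<Longrightarrow> y \<in> subfield_pm m \<Longrightarrow> (x / y :: 'a) \<in> subfield_pm m"
  unfolding subfield_pm_def by (simp add: power_divide)
lemma S_0: "(0::'a) \<in> subfield_pm m"
  unfolding subfield_pm_def by (simp add: power_0_left)
lemma S_P: "(x::'a) \<in> prime_subfield \<Longrightarrow> x \<in> subfield_pm m"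
  unfolding subfield_pm_def by (simp add: P_pow3k)

lemma N_S: "(t::'a)^(3^m+1) \<in> subfield_pm m"
proof -
  have "(t^(3^m+1))^(3^m) = ((t^(3^m))^(3^m)) * t^(3^m)"
    by (simp add: power_mult_distrib)
  also have "\<dots> = t^(3^m+1)" using pow_qq by simp
  finally show ?thesis unfolding subfield_pm_def by simp
qed

lemma N_zero_iff: "(t::'a)^(3^m+1) = 0 \<longleftrightarrow> t = 0"
  by simp

lemma n_eq: "(3::nat)^(2*m) = 3^m * 3^m"
  by (simp add: power_add[symmetric] mult_2)

lemma S_card_fib:
  assumes m1: "m \<ge> 1"
  shows "card (subfield_pm m :: 'a set) = 3^m"
    and "\<And>u. u \<in> subfield_pm m - {0} \<Longrightarrow> card {t::'a. t^(3^m+1) = u} = 3^m + 1"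
proof -
  let ?q = "(3::nat)^m"
  let ?S = "subfield_pm m :: 'a set"
  let ?fib = "\<lambda>u. {t::'a. t^(3^m+1) = u}"
  have q1: "?q \<ge> 1" by simp
  have U: "(UNIV - {0} :: 'a set) = (\<Union>u\<in>?S - {0}. ?fib u)"
    using N_S by auto
  have cF: "card (UNIV - {0} :: 'a set) = ?q * ?q - 1"
    using cardF n_eq by (simp add: card_Diff_singleton)
  have fib_le: "\<And>u. card (?fib u) \<le> ?q + 1" by (rule fiber_le) simp
  have disj: "card (\<Union>u\<in>?S - {0}. ?fib u) = (\<Sum>u\<in>?S - {0}. card (?fib u))"
    by (rule card_UN_disjoint) auto
  have "?q * ?q - 1 \<le> (\<Sum>u\<in>?S - {0}. card (?fib u))"
    using U cF disj by simp
  also have "\<dots> \<le> (\<Sum>u\<in>?S - {0}. ?q + 1)"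
    by (rule sum_mono) (rule fib_le)
  also have "\<dots> = card (?S - {0}) * (?q + 1)" by simp
  finally have A: "(?q - 1) * (?q + 1) \<le> card (?S - {0}) * (?q + 1)"
    by (simp add: algebra_simps)
  hence "?q - 1 \<le> card (?S - {0})" by (subst (asm) mult_le_cancel2) simp
  moreover have cS: "card (?S - {0}) = card ?S - 1" using S_0 by (simp add: card_Diff_singleton)
  moreover have "card ?S \<ge> 1" using S_0 by (metis card_0_eq empty_iff finite less_one not_le)
  ultimately have "card ?S \<ge> ?q" by linarith
  thus cS2: "card ?S = ?q" using S_card_le[OF m1] by simp
  fix u assume u: "u \<in> ?S - {0}"
  show "card (?fib u) = ?q + 1"
  proof (rule ccontr)
    assume "card (?fib u) \<noteq> ?q + 1"
    hence lt: "card (?fib u) < ?q + 1" using fib_le[of u] by simp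
    have "(\<Sum>u\<in>?S - {0}. card (?fib u)) < (\<Sum>u\<in>?S - {0}. ?q + 1)"
      by (rule sum_strict_mono_ex1) (use fib_le u lt in auto)
    also have "\<dots> = (?q - 1) * (?q + 1)" using cS cS2 by simp
    also have "\<dots> = ?q * ?q - 1" by (simp add: algebra_simps)
    finally show False using U cF disj by simp
  qed
qed

lemma coset_count:
  fixes D :: "'a set" and \<phi> :: "'a \<Rightarrow> 'a"
  assumes fin: "finite D" and xz: "xz \<in> D" and cl: "\<And>x. x \<in> D \<Longrightarrow> x + xz \<in> D"
    and PP: "\<And>x. x \<in> D \<Longrightarrow> \<phi> x \<in> prime_subfield"
    and sh: "\<And>x. x \<in> D \<Longrightarrow> \<phi> (x + xz) = \<phi> x + 1"
    and v: "v \<in> prime_subfield"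
  shows "3 * card {x\<in>D. \<phi> x = v} = card D"
proof -
  let ?C = "\<lambda>v. card {x\<in>D. \<phi> x = v}"
  have le: "?C w \<le> ?C (w + 1)" for w
  proof -
    have "(\<lambda>x. x + xz) ` {x\<in>D. \<phi> x = w} \<subseteq> {x\<in>D. \<phi> x = w + 1}"
      using cl sh by auto
    moreover have "inj_on (\<lambda>x. x + xz) {x\<in>D. \<phi> x = w}" by (auto simp: inj_on_def)
    ultimately show ?thesis using fin by (metis (no_types, lifting) card_inj_on_le finite_subset mem_Collect_eq subsetI)
  qed
  have a: "(1::'a) + 1 = -1" using two_eq by simp
  have b: "(-1::'a) + 1 = 0" by simp
  have l1: "?C 0 \<le> ?C 1" using le[of 0] by simp
  have l2: "?C 1 \<le> ?C (-1)" using le[of 1, unfolded a] .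
  have l3: "?C (-1) \<le> ?C 0" using le[of "-1", unfolded b] .
  have e: "?C 0 = ?C 1" "?C 1 = ?C (-1)"
    using l1 l2 l3 by linarith+
  have ne: "(1::'a) \<noteq> -1" using two_ne0 by (metis one_add_one add_eq_0_iff)
  have "D = {x\<in>D. \<phi> x = 0} \<union> {x\<in>D. \<phi> x = 1} \<union> {x\<in>D. \<phi> x = -1}"
    using PP unfolding P_iff by blast
  hence "card D = card ({x\<in>D. \<phi> x = 0} \<union> {x\<in>D. \<phi> x = 1} \<union> {x\<in>D. \<phi> x = -1})" by simp
  also have "\<dots> = ?C 0 + ?C 1 + ?C (-1)"
    using fin ne by (subst card_Un_disjoint; auto)+
  finally show ?thesis using e v unfolding P_iff by auto
qed



lemma T_on_S: "(x::'a) \<in> subfield_pm m \<Longrightarrow> trace3 (2*m) x = 2 * (\<Sum>i<m. x^(3^i))"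
proof -
  assume x: "x \<in> subfield_pm m"
  have "trace3 (2*m) x = (\<Sum>i<m. x^(3^i)) + (\<Sum>i<m. x^(3^(m+i)))"
    unfolding trace3_def mult_2 by (rule split_sum)
  also have "(\<Sum>i<m. x^(3^(m+i))) = (\<Sum>i<m. x^(3^i))"
  proof (rule sum.cong)
    fix i
    have "x^(3^(m+i)) = (x^(3^m))^(3^i)" by (simp only: power_add power_mult)
    also have "\<dots> = x^(3^i)" using x unfolding subfield_pm_def by simp
    finally show "x^(3^(m+i)) = x^(3^i)" .
  qed (rule refl)
  finally show ?thesis by (simp only: mult_2)
qed

lemma get_one: "trace3 (2*m) (y::'a) \<noteq> 0 \<Longrightarrow> \<exists>z\<in>{y, y+y}. trace3 (2*m) z = 1"
proof -
  assume "trace3 (2*m) y \<noteq> 0"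
  hence "trace3 (2*m) y = 1 \<or> trace3 (2*m) y = -1" using T_P[of y] unfolding P_iff by auto
  moreover have "(-1::'a) + -1 = 1"
  proof -
    have "(-1::'a) + -1 = - 2" by simp
    thus ?thesis using two_eq by simp
  qed
  moreover have "trace3 (2*m) (y+y) = trace3 (2*m) y + trace3 (2*m) y" by (rule T_add)
  ultimately show ?thesis by force
qed

lemma lin_count:
  assumes m1: "m \<ge> 1" and b: "(b::'a) \<noteq> 0" and v: "v \<in> prime_subfield"
  shows "3 * card {t::'a. trace3 (2*m) (b*t) = v} = 3^(2*m)"
proof -
  obtain y :: 'a where y: "trace3 (2*m) y \<noteq> 0" using T_nonvanish[OF m1] by blast
  have "\<exists>z\<in>{y, y+y}. trace3 (2*m) z = 1" by (rule get_one[OF y])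
  then obtain z :: 'a where z: "trace3 (2*m) z = 1" by blast
  have "3 * card {t\<in>UNIV. trace3 (2*m) (b*t) = v} = card (UNIV::'a set)"
    by (rule coset_count[where xz="z/b"]) (use b z v T_P in \<open>auto simp: distrib_left T_add\<close>)
  thus ?thesis using cardF by simp
qed

lemma S_count:
  assumes m1: "m \<ge> 1" and a: "a \<in> subfield_pm m" "(a::'a) \<noteq> 0" and v: "v \<in> prime_subfield"
  shows "3 * card {u\<in>subfield_pm m. trace3 (2*m) (a*u) = v} = 3^m"
proof -
  have "card (subfield_pm m :: 'a set) > 3^(m-1)" using S_card_fib(1)[OF m1] m1
    by (simp add: power_strict_increasing)
  then obtain x :: 'a where x: "x \<in> subfield_pm m" "(\<Sum>i<m. x^(3^i)) \<noteq> 0"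
    using sum_pow_nonvanish[OF m1] by blast
  have "trace3 (2*m) x \<noteq> 0" using T_on_S[OF x(1)] x(2) two_ne0 by simp
  hence "\<exists>z\<in>{x, x+x}. trace3 (2*m) z = 1" by (rule get_one)
  then obtain z :: 'a where z: "z \<in> {x, x+x}" "trace3 (2*m) z = 1" by blast
  have zS: "z \<in> subfield_pm m" using z(1) x(1) S_add[OF x(1) x(1)] by auto
  have "3 * card {u\<in>subfield_pm m. trace3 (2*m) (a*u) = v} = card (subfield_pm m :: 'a set)"
    by (rule coset_count[where xz="z/a"])
       (use a z zS v T_P in \<open>auto simp: distrib_left T_add S_divide S_add\<close>)
  thus ?thesis using S_card_fib(1)[OF m1] by simp
qed

lemma Q_count:
  assumes m1: "m \<ge> 1" and a: "a \<in> subfield_pm m" "(a::'a) \<noteq> 0" and v: "v \<in> prime_subfield"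
  shows "3 * card {t::'a. trace3 (2*m) (a * t^(3^m+1)) = v} =
           (if v = 0 then 3^(2*m) - 2 * 3^m else 3^(2*m) + 3^m)"
proof -
  let ?q = "(3::nat)^m"
  let ?S = "subfield_pm m :: 'a set"
  let ?fib = "\<lambda>u. {t::'a. t^(3^m+1) = u}"
  let ?Q = "\<lambda>t::'a. trace3 (2*m) (a * t^(3^m+1))"
  define U where "U = {u\<in>?S - {0}. trace3 (2*m) (a*u) = v}"
  define c where "c = card {u\<in>?S. trace3 (2*m) (a*u) = v}"
  have c3: "3 * c = ?q" unfolding c_def by (rule S_count[OF m1 a v])
  have finU: "finite U" by simp
  have UN: "{t. ?Q t = v} - {0} = (\<Union>u\<in>U. ?fib u)"
    unfolding U_def using N_S by auto
  have cUN: "card (\<Union>u\<in>U. ?fib u) = card U * (?q + 1)"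
  proof -
    have "card (\<Union>u\<in>U. ?fib u) = (\<Sum>u\<in>U. card (?fib u))"
      by (rule card_UN_disjoint) auto
    also have "\<dots> = (\<Sum>u\<in>U. ?q + 1)"
      by (rule sum.cong) (use S_card_fib(2)[OF m1] U_def in auto)
    finally show ?thesis by simp
  qed
  have Q0: "?Q 0 = 0" by (simp add: T_zero)
  show ?thesis
  proof (cases "v = 0")
    case True
    have "U = {u\<in>?S. trace3 (2*m) (a*u) = v} - {0}" unfolding U_def by auto
    hence cU: "card U = c - 1" unfolding c_def using True S_0 T_zero by (simp add: card_Diff_singleton)
    have inn: "0 \<in> {t. ?Q t = v}" using True Q0 by simp
    have pos: "card {t. ?Q t = v} > 0" using inn by (metis card_gt_0_iff empty_iff finite)
    have "card {t. ?Q t = v} = card ({t. ?Q t = v} - {0}) + 1"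
      unfolding card_Diff_singleton[OF inn] using pos by linarith
    hence ct: "card {t. ?Q t = v} = (c - 1) * (?q + 1) + 1" using UN cUN cU by simp
    obtain c' where c': "c = Suc c'" using c3 by (cases c) auto
    have q: "?q = 3*c'+3" using c3 c' by simp
    have ar: "3 * ((c - 1) * (?q + 1) + 1) + 2 * ?q = ?q * ?q"
      unfolding q c' by (simp add: algebra_simps)
    have e: "3 * card {t. ?Q t = v} + 2 * ?q = ?q * ?q"
      unfolding ct by (rule ar)
    have n: "(3::nat)^(2*m) = ?q * ?q" by (rule n_eq)
    show ?thesis using True e n by simp
  next
    case False
    have "U = {u\<in>?S. trace3 (2*m) (a*u) = v}" unfolding U_def using False T_zero by auto
    hence cU: "card U = c" unfolding c_def by simp
    have "{t. ?Q t = v} - {0} = {t. ?Q t = v}" using False Q0 by auto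
    hence ct: "card {t. ?Q t = v} = c * (?q + 1)" using UN cUN cU by simp
    have n: "(3::nat)^(2*m) = ?q * ?q" by (rule n_eq)
    have e: "3 * card {t. ?Q t = v} = ?q * ?q + ?q"
      unfolding ct by (simp flip: c3 add: algebra_simps)
    show ?thesis using False e n by simp
  qed
qed


lemma shift_card: "card {t::'a. f (t + s) = w} = card {u::'a. f u = w}"
proof -
  have "bij_betw (\<lambda>t. t + s) {t::'a. f (t + s) = w} {u::'a. f u = w}"
    by (rule bij_betwI[where g="\<lambda>u. u - s"]) auto
  thus ?thesis by (rule bij_betw_same_card)
qed

lemma hweight_eq: "hweight (c::'a \<Rightarrow> 'a) = 3^(2*m) - card {t. c t = 0}"
proof -
  have "{t. c t \<noteq> 0} = UNIV - {t. c t = 0}" by auto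
  hence "card {t. c t \<noteq> 0} = card (UNIV::'a set) - card {t. c t = 0}"
    by (simp add: card_Diff_subset)
  thus ?thesis unfolding hweight_def using cardF by simp
qed

lemma card_le_n: "card (A::'a set) \<le> 3^(2*m)"
  using card_mono[of UNIV A] cardF by simp

lemma q_bounds: "m \<ge> 1 \<Longrightarrow> (3::nat)^m \<ge> 3 \<and> (3::nat)^(2*m) \<ge> 3 * 3^m"
proof -
  assume m1: "m \<ge> 1"
  have q3: "(3::nat)^m \<ge> 3" using power_increasing[of 1 m "3::nat"] m1 by simp
  moreover have "3 * 3^m \<le> 3^m * (3::nat)^m" using q3 by simp
  ultimately show ?thesis using n_eq by simp
qed

lemma ar1: "3*C = n - 2*q \<Longrightarrow> C \<le> n \<Longrightarrow> 3*q \<le> n \<Longrightarrow> 3*(n-C) = 2*n + 2*(q::nat)"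
  by linarith
lemma ar2: "3*C = n + q \<Longrightarrow> C \<le> n \<Longrightarrow> 3*(n-C) = 2*n - (q::nat)"
  by linarith

lemma weight_shift:
  assumes m1: "m \<ge> 1" and a: "a \<in> subfield_pm m" "(a::'a) \<noteq> 0" and e: "e \<in> prime_subfield"
  shows "3 * hweight (\<lambda>t. trace3 (2*m) (a*(t+s)^(3^m+1)) + e) =
           (if e = 0 then 2 * 3^(2*m) + 2 * 3^m else 2 * 3^(2*m) - 3^m)"
proof -
  define Q where "Q = (\<lambda>t::'a. trace3 (2*m) (a * t^(3^m+1)))"
  have fe: "(\<lambda>t. trace3 (2*m) (a*(t+s)^(3^m+1)) + e) = (\<lambda>t. Q (t+s) + e)"
    unfolding Q_def by simp
  have "{t. Q (t+s) + e = 0} = {t. Q (t+s) = -e}" by (auto simp: eq_neg_iff_add_eq_0)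
  hence C: "card {t. Q (t+s) + e = 0} = card {u. Q u = -e}" using shift_card[of Q s "-e"] by simp
  have me: "-e \<in> prime_subfield" using P_minus[OF e] .
  have QC: "3 * card {u. Q u = -e} = (if -e = 0 then 3^(2*m) - 2 * 3^m else 3^(2*m) + 3^m)"
    unfolding Q_def by (rule Q_count[OF m1 a me])
  have hw: "hweight (\<lambda>t. Q (t+s) + e) = 3^(2*m) - card {u. Q u = -e}"
    using hweight_eq[of "\<lambda>t. Q (t+s) + e"] C by simp
  have qb: "3 * 3^m \<le> (3::nat)^(2*m)" using q_bounds[OF m1] by simp
  have le: "card {u. Q u = -e} \<le> 3^(2*m)" by (rule card_le_n)
  show ?thesis
  proof (cases "e = 0")
    case True
    hence "3 * card {u. Q u = -e} = 3^(2*m) - 2 * 3^m" using QC by simp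
    from ar1[OF this le qb] show ?thesis unfolding fe hw using True by simp
  next
    case False
    hence "3 * card {u. Q u = -e} = 3^(2*m) + 3^m" using QC by simp
    from ar2[OF this le] show ?thesis unfolding fe hw using False by simp
  qed
qed

lemma lin_weight:
  assumes m1: "m \<ge> 1" and b: "(b::'a) \<noteq> 0" and h: "h \<in> prime_subfield"
  shows "3 * hweight (\<lambda>t. trace3 (2*m) (b*t) + h) = 2 * 3^(2*m)"
proof -
  have "{t. trace3 (2*m) (b*t) + h = 0} = {t. trace3 (2*m) (b*t) = -h}"
    by (auto simp: eq_neg_iff_add_eq_0)
  hence hw: "hweight (\<lambda>t. trace3 (2*m) (b*t) + h) = 3^(2*m) - card {t. trace3 (2*m) (b*t) = -h}"
    using hweight_eq[of "\<lambda>t. trace3 (2*m) (b*t) + h"] by simp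
  have LC: "3 * card {t::'a. trace3 (2*m) (b*t) = -h} = 3^(2*m)"
    by (rule lin_count[OF m1 b P_minus[OF h]])
  show ?thesis unfolding hw using LC by linarith
qed


lemma pw: "(x::'a)^(3^m+1) = x^(3^m) * x"
  by (simp only: power_add power_one_right)

lemma expand:
  assumes a: "a \<in> subfield_pm m"
  shows "trace3 (2*m) (a*(t+s)^(3^m+1)) =
         trace3 (2*m) (a*t^(3^m+1) + (2*a*s^(3^m))*t) + trace3 (2*m) (a*s^(3^m+1 ::nat) :: 'a)"
proof -
  let ?T = "trace3 (2*m) :: 'a \<Rightarrow> 'a"
  let ?q = "(3::nat)^m"
  have aq: "a^?q = a" using a unfolding subfield_pm_def by simp
  have key: "?T (a*(t^?q*s)) = ?T (a*(s^?q*t))"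
  proof -
    have "?T (a*(t^?q*s)) = ?T ((a*(t^?q*s))^?q)" by (rule T_pow3k[symmetric])
    also have "(a*(t^?q*s))^?q = a^?q * ((t^?q)^?q * s^?q)" by (simp only: power_mult_distrib)
    also have "\<dots> = a*(t * s^?q)" by (simp only: aq pow_qq)
    also have "\<dots> = a*(s^?q*t)" by (simp only: mult.commute)
    finally show ?thesis .
  qed
  have "(t+s)^(?q+1) = (t+s)^?q * (t+s)" by (rule pw)
  also have "\<dots> = (t^?q + s^?q)*(t+s)" by (simp only: frob)
  finally have p: "a*(t+s)^(?q+1) = a*(t^?q*t) + a*(t^?q*s) + a*(s^?q*t) + a*(s^?q*s)"
    by (simp only: distrib_left distrib_right add.assoc) (simp only: add_ac)
  have d: "(2*a*s^?q)*t = a*(s^?q*t) + a*(s^?q*t)"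
    by (simp only: mult_2 distrib_right mult.assoc)
  show ?thesis unfolding p d pw[of t] pw[of s] by (simp only: T_add key add_ac)
qed


lemma code_lower:
  assumes m1: "m \<ge> 1" and c: "c \<in> (code_C m :: ('a \<Rightarrow> 'a) set)" and nz: "c \<noteq> (\<lambda>_. 0)"
  shows "2 * 3^(2*m) - 3^m \<le> 3 * hweight c"
proof -
  obtain a b h where cdef: "c = (\<lambda>t. trace3 (2*m) (a * t ^ (3 ^ m + 1) + b * t) + h)"
    and a: "a \<in> subfield_pm m" and h: "h \<in> prime_subfield"
    using c unfolding code_C_def by blast
  show ?thesis
  proof (cases "a = 0")
    case True
    hence c2: "c = (\<lambda>t. trace3 (2*m) (b*t) + h)" unfolding cdef by simp
    show ?thesis
    proof (cases "b = 0")
      case True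
      hence "c = (\<lambda>t. h)" unfolding c2 by (simp add: T_zero)
      hence "h \<noteq> 0" "hweight c = card (UNIV::'a set)" using nz unfolding hweight_def by auto
      thus ?thesis using cardF by simp
    next
      case False
      show ?thesis unfolding c2 lin_weight[OF m1 False h] by simp
    qed
  next
    case False
    define s where "s = (b / (2*a))^(3^m)"
    have "s^(3^m) = b/(2*a)" unfolding s_def by (rule pow_qq)
    hence bs: "2*a*s^(3^m) = b" using False two_ne0 by simp
    define e where "e = h - trace3 (2*m) (a*s^(3^m+1))"
    have e: "e \<in> prime_subfield" unfolding e_def using h T_P by (simp add: P_diff)
    have "c = (\<lambda>t. trace3 (2*m) (a*(t+s)^(3^m+1)) + e)"
      unfolding cdef e_def expand[OF a] bs by (simp add: algebra_simps)
    hence "3 * hweight c = (if e = 0 then 2 * 3^(2*m) + 2 * 3^m else 2 * 3^(2*m) - 3^m)"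
      using weight_shift[OF m1 a False e] by simp
    thus ?thesis by (cases "e = 0") (auto intro: le_trans[OF diff_le_self])
  qed
qed

lemma fam_code:
  assumes a: "a \<in> subfield_pm m" and e: "e \<in> prime_subfield"
  shows "(\<lambda>t. trace3 (2*m) (a*(t+s)^(3^m+1)) + e) \<in> (code_C m :: ('a \<Rightarrow> 'a) set)"
proof -
  have "(\<lambda>t. trace3 (2*m) (a*(t+s)^(3^m+1)) + e) =
        (\<lambda>t. trace3 (2*m) (a*t^(3^m+1) + (2*a*s^(3^m))*t) + (trace3 (2*m) (a*s^(3^m+1)) + e))"
    unfolding expand[OF a] by (simp add: add.assoc)
  moreover have "trace3 (2*m) (a*s^(3^m+1)) + e \<in> prime_subfield" using T_P e by (simp add: P_add)
  ultimately show ?thesis unfolding code_C_def using a by blast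
qed

lemma fam_min:
  assumes m1: "m \<ge> 1" and a: "a \<in> subfield_pm m" "(a::'a) \<noteq> 0"
    and e: "e \<in> prime_subfield" "e \<noteq> 0"
  shows "(\<lambda>t. trace3 (2*m) (a*(t+s)^(3^m+1)) + e) \<noteq> (\<lambda>_. 0)"
    and "hweight (\<lambda>t. trace3 (2*m) (a*(t+s)^(3^m+1)) + e) = min_weight TYPE('a) m"
proof -
  let ?c = "\<lambda>t. trace3 (2*m) (a*(t+s)^(3^m+1)) + e"
  have w: "3 * hweight ?c = 2 * 3^(2*m) - 3^m" using weight_shift[OF m1 a e(1)] e(2) by simp
  have qb: "3 * 3^m \<le> (3::nat)^(2*m)" using q_bounds[OF m1] by simp
  have pos: "(0::nat) < 3^m" by simp
  have hn: "hweight ?c \<noteq> 0" using w qb pos by linarith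
  show nz: "?c \<noteq> (\<lambda>_. 0)"
  proof
    assume h0: "?c = (\<lambda>_. 0)"
    have "hweight ?c = hweight (\<lambda>_::'a. 0::'a)" by (simp only: h0)
    also have "\<dots> = 0" by (simp add: hweight_def)
    finally show False using hn by simp
  qed
  have inC: "?c \<in> (code_C m :: ('a \<Rightarrow> 'a) set)" by (rule fam_code[OF a(1) e(1)])
  show "hweight ?c = min_weight TYPE('a) m"
    unfolding min_weight_def
  proof (rule Least_equality[symmetric])
    show "\<exists>c\<in>(code_C m :: ('a \<Rightarrow> 'a) set). c \<noteq> (\<lambda>_. 0) \<and> hweight c = hweight ?c"
      using inC nz by blast
  next
    fix y assume "\<exists>c\<in>(code_C m :: ('a \<Rightarrow> 'a) set). c \<noteq> (\<lambda>_. 0) \<and> hweight c = y"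
    then obtain c where "c \<in> (code_C m :: ('a \<Rightarrow> 'a) set)" "c \<noteq> (\<lambda>_. 0)" "hweight c = y" by blast
    hence "2 * 3^(2*m) - 3^m \<le> 3 * y" using code_lower[OF m1] by blast
    thus "hweight ?c \<le> y" using w by linarith
  qed
qed

lemma fam_block:
  assumes m1: "m \<ge> 1" and a: "a \<in> subfield_pm m" "(a::'a) \<noteq> 0"
    and e: "e \<in> prime_subfield" "e \<noteq> 0"
  shows "{t. trace3 (2*m) (a*(t+s)^(3^m+1)) + e \<noteq> 0} \<in> blocks_Dd m"
proof -
  let ?c = "\<lambda>t. trace3 (2*m) (a*(t+s)^(3^m+1)) + e"
  have P: "?c \<in> code_C m \<and> ?c \<noteq> (\<lambda>_. 0) \<and> hweight ?c = min_weight TYPE('a) m"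
    using fam_code[OF a(1) e(1), of s] fam_min[OF m1 a e, of s] by blast
  show ?thesis unfolding blocks_Dd_def mem_Collect_eq
    by (rule exI[of _ ?c]) (use P in simp)
qed

lemma fam_incid:
  assumes e: "e \<in> prime_subfield"
  shows "incidence_vec {t. trace3 (2*m) (a*(t+s)^(3^m+1)) + e \<noteq> 0} t
         = (trace3 (2*m) (a*(t+s)^(3^m+1)) + (e::'a))^2"
proof -
  have "trace3 (2*m) (a*(t+s)^(3^m+1)) + e \<in> prime_subfield" using T_P e by (simp add: P_add)
  thus ?thesis unfolding incidence_vec_def using P_sq by auto
qed


lemma DC_block:
  assumes B: "B \<in> (blocks_Dd m :: 'a set set)" and k: "(k::'a) \<in> prime_subfield"
  shows "(\<lambda>t. k * incidence_vec B t) \<in> design_code m"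
proof -
  define K where "K = (\<lambda>B'. if B' = B then k else (0::'a))"
  have fin: "finite (blocks_Dd m :: 'a set set)" by simp
  have e1: "K B' * incidence_vec B' t = (if B' = B then k * incidence_vec B t else 0)" for B' t
    by (simp add: K_def)
  have "(\<lambda>t. k * incidence_vec B t) = (\<lambda>t. \<Sum>B'\<in>blocks_Dd m. K B' * incidence_vec B' t)"
    unfolding e1 using B fin by (simp add: sum.delta')
  moreover have "\<forall>B'. K B' \<in> prime_subfield" unfolding K_def using k P_0 by simp
  ultimately show ?thesis unfolding design_code_def mem_Collect_eq by blast
qed

lemma DC_add:
  assumes f: "f \<in> (design_code m :: ('a \<Rightarrow> 'a) set)" and g: "g \<in> design_code m"
  shows "(\<lambda>t. f t + g t) \<in> design_code m"
proof -
  obtain k1 where k1: "f = (\<lambda>t. \<Sum>B\<in>blocks_Dd m. k1 B * incidence_vec B t)" "\<forall>B. k1 B \<in> prime_subfield"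
    using f unfolding design_code_def by blast
  obtain k2 where k2: "g = (\<lambda>t. \<Sum>B\<in>blocks_Dd m. k2 B * incidence_vec B t)" "\<forall>B. k2 B \<in> prime_subfield"
    using g unfolding design_code_def by blast
  have "(\<lambda>t. f t + g t) = (\<lambda>t. \<Sum>B\<in>blocks_Dd m. (k1 B + k2 B) * incidence_vec B t)"
    unfolding k1 k2 by (simp add: sum.distrib distrib_right)
  moreover have "\<forall>B. k1 B + k2 B \<in> prime_subfield" using k1 k2 P_add by blast
  ultimately show ?thesis unfolding design_code_def mem_Collect_eq
    by (intro exI[of _ "\<lambda>B. k1 B + k2 B"]) simp
qed

lemma ident:
  fixes Q L c :: 'a
  shows "(c - 1) * (Q+L+c+1)^2 + (-1-c) * (Q+L+c-1)^2 + (1-c) * (Q-L+c+1)^2 + (1+c) * (Q-L+c-1)^2 = Q*L"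
proof -
  have "(c - 1) * (Q+L+c+1)^2 + (-1-c) * (Q+L+c-1)^2 + (1-c) * (Q-L+c+1)^2 + (1+c) * (Q-L+c-1)^2
        = Q*L + 3 * (-3*Q*L)"
    by (simp add: algebra_simps power2_eq_square)
  thus ?thesis using three0 by simp
qed


lemma main:
  assumes m1: "m \<ge> 1" and a: "a \<in> subfield_pm m" "(a::'a) \<noteq> 0"
  shows "(\<lambda>t. trace3 (2*m) (a * t ^ (3 ^ m + 1)) * trace3 (2*m) (b * t)) \<in> design_code m"
proof -
  let ?T = "trace3 (2*m) :: 'a \<Rightarrow> 'a"
  let ?q = "(3::nat)^m"
  define s where "s = (b / (2*a))^(3^m)"
  have "s^(3^m) = b/(2*a)" unfolding s_def by (rule pow_qq)
  hence bs: "2*a*s^(3^m) = b" using a(2) two_ne0 by simp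
  define c where "c = ?T (a*s^(?q+1))"
  have cP: "c \<in> prime_subfield" unfolding c_def by (rule T_P)
  have X: "?T (a*(t+s)^(?q+1)) = ?T (a*t^(?q+1)) + ?T (b*t) + c" for t
    unfolding expand[OF a(1)] bs c_def T_add ..
  have ms1: "(-s)^?q = - (s^?q)" by (rule frob_minus)
  have ms2: "(-s)^(?q+1) = s^(?q+1)" unfolding pw ms1 by simp
  have ms3: "(2*a*(-s)^?q)*t = - (b*t)" for t unfolding ms1 bs[symmetric] by simp
  have Y: "?T (a*(t+ -s)^(?q+1)) = ?T (a*t^(?q+1)) - ?T (b*t) + c" for t
    unfolding expand[OF a(1)] ms3 ms2 c_def T_add T_minus by simp
  have P1: "(1::'a) \<in> prime_subfield" and Pm1: "(-1::'a) \<in> prime_subfield" by (rule P_1, rule P_m1)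
  let ?B1 = "{t. ?T (a*(t+s)^(?q+1)) + 1 \<noteq> 0}"
  let ?B2 = "{t. ?T (a*(t+s)^(?q+1)) + -1 \<noteq> 0}"
  let ?B3 = "{t. ?T (a*(t+ -s)^(?q+1)) + 1 \<noteq> 0}"
  let ?B4 = "{t. ?T (a*(t+ -s)^(?q+1)) + -1 \<noteq> 0}"
  have B1: "?B1 \<in> blocks_Dd m" by (rule fam_block[OF m1 a P1]) simp
  have B2: "?B2 \<in> blocks_Dd m" by (rule fam_block[OF m1 a Pm1]) simp
  have B3: "?B3 \<in> blocks_Dd m" by (rule fam_block[OF m1 a P1]) simp
  have B4: "?B4 \<in> blocks_Dd m" by (rule fam_block[OF m1 a Pm1]) simp
  have k1: "c - 1 \<in> prime_subfield" using cP P1 by (rule P_diff)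
  have k2: "-1 - c \<in> prime_subfield" using Pm1 cP by (rule P_diff)
  have k3: "1 - c \<in> prime_subfield" using P1 cP by (rule P_diff)
  have k4: "1 + c \<in> prime_subfield" using P1 cP by (rule P_add)
  have mem: "(\<lambda>t. ((c - 1) * incidence_vec ?B1 t + (-1 - c) * incidence_vec ?B2 t)
              + ((1 - c) * incidence_vec ?B3 t + (1 + c) * incidence_vec ?B4 t)) \<in> design_code m"
    by (intro DC_add DC_block B1 B2 B3 B4 k1 k2 k3 k4)
  have eq: "((c - 1) * incidence_vec ?B1 t + (-1 - c) * incidence_vec ?B2 t)
              + ((1 - c) * incidence_vec ?B3 t + (1 + c) * incidence_vec ?B4 t)
           = ?T (a * t ^ (?q + 1)) * ?T (b * t)" for t
  proof -
    have i1: "incidence_vec ?B1 t = (?T (a*t^(?q+1)) + ?T (b*t) + c + 1)^2"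
    proof -
      have "incidence_vec ?B1 t = (?T (a*(t+s)^(?q+1)) + 1)^2" by (rule fam_incid[OF P1])
      also have "\<dots> = (?T (a*t^(?q+1)) + ?T (b*t) + c + 1)^2" unfolding X by simp
      finally show ?thesis .
    qed
    have i2: "incidence_vec ?B2 t = (?T (a*t^(?q+1)) + ?T (b*t) + c - 1)^2"
    proof -
      have "incidence_vec ?B2 t = (?T (a*(t+s)^(?q+1)) + -1)^2" by (rule fam_incid[OF Pm1])
      also have "\<dots> = (?T (a*t^(?q+1)) + ?T (b*t) + c - 1)^2" unfolding X by simp
      finally show ?thesis .
    qed
    have i3: "incidence_vec ?B3 t = (?T (a*t^(?q+1)) - ?T (b*t) + c + 1)^2"
    proof -
      have "incidence_vec ?B3 t = (?T (a*(t+ -s)^(?q+1)) + 1)^2" by (rule fam_incid[OF P1])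
      also have "\<dots> = (?T (a*t^(?q+1)) - ?T (b*t) + c + 1)^2" unfolding Y by simp
      finally show ?thesis .
    qed
    have i4: "incidence_vec ?B4 t = (?T (a*t^(?q+1)) - ?T (b*t) + c - 1)^2"
    proof -
      have "incidence_vec ?B4 t = (?T (a*(t+ -s)^(?q+1)) + -1)^2" by (rule fam_incid[OF Pm1])
      also have "\<dots> = (?T (a*t^(?q+1)) - ?T (b*t) + c - 1)^2" unfolding Y by simp
      finally show ?thesis .
    qed
    show ?thesis unfolding i1 i2 i3 i4 using ident[of c "?T (a*t^(?q+1))" "?T (b*t)"]
      by (simp add: add.assoc)
  qed
  show ?thesis using mem unfolding eq .
qed

end

theorem lemma3p9:
  fixes m :: nat and a b :: "'a::{field,finite}"
  assumes "m \<ge> 2"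
    and "CARD('a) = 3 ^ (2 * m)"
    and "a \<in> subfield_pm m" and "a \<noteq> 0"
  shows "(\<lambda>t. trace3 (2*m) (a * t ^ (3 ^ m + 1)) * trace3 (2*m) (b * t)) \<in> design_code m"
  using main[OF assms(2) _ assms(3) assms(4)] assms(1) by simp

end
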